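(* If $p\geq 7$ is an integer, then there exists a $p$-qubit UPB of size $s$ for every integer $s$ with $$\frac{p^2+3p-30}{2}\leq s\leq 2^p-6.$$
   Context: A product state in $(\mathbb{C}^2)^{\otimes p}$ is a vector $|v_1\rangle\otimes\cdots\otimes|v_p\rangle$ with each $|v_j\rangle\in\mathbb{C}^2$. A $p$-qubit unextendible product basis (UPB) is a finite set $\mathcal{S}\subseteq(\mathbb{C}^2)^{\otimes p}$ of unit product vectors that are pairwise orthogonal, such that no nonzero product vector outside $\mathcal{S}$ is orthogonal to every element of $\mathcal{S}$. The size of a UPB is its number of elements. *)

theory Defs
  imports Complex_Main
begin

text \<open>The p-qubit space (C^2)^{tensor p} is modelled as complex-valued functions on
  bit strings (bool lists) of length p (computational basis); entries at other
  lists are zero. A single-qubit vector is a function bool => complex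
  (False = |0>, True = |1>).\<close>

definition basis_strings :: "nat \<Rightarrow> bool list set" where
  "basis_strings p = {b. length b = p}"

definition prod_vec :: "nat \<Rightarrow> (nat \<Rightarrow> bool \<Rightarrow> complex) \<Rightarrow> bool list \<Rightarrow> complex" where
  "prod_vec p v = (\<lambda>b. if length b = p then (\<Prod>j<p. v j (b ! j)) else 0)"

definition is_product_vec :: "nat \<Rightarrow> (bool list \<Rightarrow> complex) \<Rightarrow> bool" where
  "is_product_vec p x \<longleftrightarrow> (\<exists>v. x = prod_vec p v)"

definition tinner :: "nat \<Rightarrow> (bool list \<Rightarrow> complex) \<Rightarrow> (bool list \<Rightarrow> complex) \<Rightarrow> complex" where
  "tinner p x y = (\<Sum>b\<in>basis_strings p. cnj (x b) * y b)"

definition is_UPB :: "nat \<Rightarrow> (bool list \<Rightarrow> complex) set \<Rightarrow> bool" where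
  "is_UPB p S \<longleftrightarrow>
     finite S \<and>
     (\<forall>x\<in>S. is_product_vec p x \<and> tinner p x x = 1) \<and>
     (\<forall>x\<in>S. \<forall>y\<in>S. x \<noteq> y \<longrightarrow> tinner p x y = 0) \<and>
     (\<forall>z. is_product_vec p z \<and> z \<noteq> (\<lambda>_. 0) \<and> z \<notin> S \<longrightarrow> (\<exists>x\<in>S. tinner p x z \<noteq> 0))"

end

theory Submission
  imports Defs
begin



lemma sum_prod_lists:
  fixes g :: "nat \<Rightarrow> bool \<Rightarrow> complex"
  shows "(\<Sum>b\<in>{b::bool list. length b = p}. \<Prod>j<p. g j (b ! j)) = (\<Prod>j<p. g j False + g j True)"
proof (induction p arbitrary: g)
  case 0
  have "{b::bool list. length b = 0} = {[]}" by auto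
  then show ?case by simp
next
  case (Suc p)
  have eq: "{b::bool list. length b = Suc p} = (\<lambda>(c,b). c # b) ` (UNIV \<times> {b. length b = p})"
    by (auto simp: length_Suc_conv image_iff)
  have inj: "inj_on (\<lambda>(c,b). c # (b::bool list)) (UNIV \<times> {b. length b = p})"
    by (auto simp: inj_on_def)
  have fin: "finite {b::bool list. length b = p}" using finite_lists_length_eq[of "UNIV::bool set" p] by simp
  have "(\<Sum>b\<in>{b::bool list. length b = Suc p}. \<Prod>j<Suc p. g j (b ! j))
      = (\<Sum>(c,b)\<in>UNIV \<times> {b. length b = p}. \<Prod>j<Suc p. g j ((c#b) ! j))"
    unfolding eq by (subst sum.reindex[OF inj]) (simp add: case_prod_unfold)
  also have "\<dots> = (\<Sum>(c,b)\<in>UNIV \<times> {b. length b = p}. g 0 c * (\<Prod>j<p. g (Suc j) (b ! j)))"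
    by (simp only: prod.lessThan_Suc_shift nth_Cons_0 nth_Cons_Suc)
  also have "\<dots> = (\<Sum>c\<in>UNIV. \<Sum>b\<in>{b. length b = p}. g 0 c * (\<Prod>j<p. g (Suc j) (b ! j)))"
    by (subst sum.cartesian_product) simp
  also have "\<dots> = (\<Sum>c\<in>UNIV. g 0 c * (\<Sum>b\<in>{b. length b = p}. (\<Prod>j<p. g (Suc j) (b ! j))))"
    by (simp add: sum_distrib_left)
  also have "\<dots> = (\<Sum>c\<in>UNIV. g 0 c * (\<Prod>j<p. g (Suc j) False + g (Suc j) True))"
    using Suc.IH[of "\<lambda>j. g (Suc j)"] by simp
  also have "\<dots> = (g 0 False + g 0 True) * (\<Prod>j<p. g (Suc j) False + g (Suc j) True)"
    by (simp add: UNIV_bool algebra_simps)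
  also have "\<dots> = (\<Prod>j<Suc p. g j False + g j True)"
    by (simp only: prod.lessThan_Suc_shift)
  finally show ?case .
qed

definition linner :: "(bool \<Rightarrow> complex) \<Rightarrow> (bool \<Rightarrow> complex) \<Rightarrow> complex" where
  "linner v w = cnj (v False) * w False + cnj (v True) * w True"

lemma tinner_prod:
  "tinner p (prod_vec p v) (prod_vec p w) = (\<Prod>j<p. linner (v j) (w j))"
proof -
  have "tinner p (prod_vec p v) (prod_vec p w)
     = (\<Sum>b\<in>{b::bool list. length b = p}. \<Prod>j<p. cnj (v j (b ! j)) * w j (b ! j))"
    unfolding tinner_def basis_strings_def prod_vec_def
    by (intro sum.cong refl) (simp add: cnj_prod prod.distrib)
  also have "\<dots> = (\<Prod>j<p. linner (v j) (w j))"
    by (subst sum_prod_lists) (simp add: linner_def)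
  finally show ?thesis .
qed




definition nrm :: "nat \<Rightarrow> real" where "nrm k = sqrt (1 + (real k)^2)"

definition svu :: "nat \<times> bool \<Rightarrow> bool \<Rightarrow> real" where
  "svu \<sigma> i = (if snd \<sigma> then (if i then 1 else - real (fst \<sigma>)) else (if i then real (fst \<sigma>) else 1))"

definition sv :: "nat \<times> bool \<Rightarrow> bool \<Rightarrow> complex" where
  "sv \<sigma> i = of_real (svu \<sigma> i / nrm (fst \<sigma>))"

lemma nrm_pos: "nrm k > 0" unfolding nrm_def by (simp add: add_pos_nonneg)

lemma nrm_sq: "(nrm k)^2 = 1 + (real k)^2"
  unfolding nrm_def by (simp add: add_nonneg_nonneg)

lemma linner_sv_real: "linner (sv \<sigma>) w = of_real (svu \<sigma> False / nrm (fst \<sigma>)) * w False + of_real (svu \<sigma> True / nrm (fst \<sigma>)) * w True"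
  unfolding linner_def sv_def by simp

lemma linner_sv_sv: "linner (sv \<sigma>) (sv \<tau>) = of_real ((svu \<sigma> False * svu \<tau> False + svu \<sigma> True * svu \<tau> True) / (nrm (fst \<sigma>) * nrm (fst \<tau>)))"
  unfolding linner_def sv_def by (simp add: add_divide_distrib)

lemma linner_sv_self: "linner (sv \<sigma>) (sv \<sigma>) = 1"
proof -
  have "svu \<sigma> False * svu \<sigma> False + svu \<sigma> True * svu \<sigma> True = (nrm (fst \<sigma>))^2"
    by (cases \<sigma>) (auto simp: svu_def nrm_sq[unfolded power2_eq_square] power2_eq_square)
  then show ?thesis using nrm_pos[of "fst \<sigma>"] by (simp add: linner_sv_sv power2_eq_square)
qed

lemma linner_sv_compl: "linner (sv (k,b)) (sv (k, \<not> b)) = 0"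
  by (cases b) (simp_all add: linner_sv_sv svu_def)

lemma svu_det:
  assumes "\<sigma> \<noteq> \<tau>"
  shows "svu \<sigma> False * svu \<tau> True - svu \<sigma> True * svu \<tau> False \<noteq> 0"
proof -
  obtain k b l c where s: "\<sigma> = (k,b)" "\<tau> = (l,c)" by (cases \<sigma>, cases \<tau>) auto
  show ?thesis
  proof (cases b; cases c)
    assume "b" "c" then show ?thesis using assms s by (simp add: svu_def)
  next
    assume "b" "\<not>c" then show ?thesis using s
      by (simp add: svu_def) (smt (verit) of_nat_0_le_iff mult_nonneg_nonneg)
  next
    assume "\<not>b" "c" then show ?thesis using s
      by (simp add: svu_def) (smt (verit) of_nat_0_le_iff mult_nonneg_nonneg)
  next
    assume "\<not>b" "\<not>c" then show ?thesis using assms s by (simp add: svu_def)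
  qed
qed

lemma sv_orth_unique:
  assumes "linner (sv \<sigma>) w = 0" "linner (sv \<tau>) w = 0" "w False \<noteq> 0 \<or> w True \<noteq> 0"
  shows "\<sigma> = \<tau>"
proof (rule ccontr)
  assume ne: "\<sigma> \<noteq> \<tau>"
  define a where "a = complex_of_real (svu \<sigma> False)"
  define b where "b = complex_of_real (svu \<sigma> True)"
  define c where "c = complex_of_real (svu \<tau> False)"
  define d where "d = complex_of_real (svu \<tau> True)"
  have n1: "nrm (fst \<sigma>) \<noteq> 0" "nrm (fst \<tau>) \<noteq> 0" using nrm_pos by (metis less_irrefl)+
  have e1: "a * w False + b * w True = 0"
  proof -
    have "linner (sv \<sigma>) w * of_real (nrm (fst \<sigma>)) = a * w False + b * w True"
      using n1 by (simp add: linner_sv_real a_def b_def field_simps)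
    then show ?thesis using assms(1) by simp
  qed
  have e2: "c * w False + d * w True = 0"
  proof -
    have "linner (sv \<tau>) w * of_real (nrm (fst \<tau>)) = c * w False + d * w True"
      using n1 by (simp add: linner_sv_real c_def d_def field_simps)
    then show ?thesis using assms(2) by simp
  qed
  have det: "a * d - b * c \<noteq> 0"
  proof -
    have "a * d - b * c = complex_of_real (svu \<sigma> False * svu \<tau> True - svu \<sigma> True * svu \<tau> False)"
      by (simp add: a_def b_def c_def d_def)
    then show ?thesis using svu_det[OF ne] by (metis of_real_eq_0_iff)
  qed
  have "(a * d - b * c) * w False = d * (a * w False + b * w True) - b * (c * w False + d * w True)"
    by (simp add: algebra_simps)
  then have wf: "w False = 0" using e1 e2 det by simp
  have "(a * d - b * c) * w True = a * (c * w False + d * w True) - c * (a * w False + b * w True)"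
    by (simp add: algebra_simps)
  then have wt: "w True = 0" using e1 e2 det by simp
  show False using wf wt assms(3) by simp
qed




type_synonym word = "(nat \<times> bool) list"

definition orthw :: "word \<Rightarrow> word \<Rightarrow> bool" where
  "orthw x y \<longleftrightarrow> (\<exists>j<length x. fst (x!j) = fst (y!j) \<and> snd (x!j) \<noteq> snd (y!j))"

definition cUPB :: "nat \<Rightarrow> word set \<Rightarrow> bool" where
  "cUPB p S \<longleftrightarrow> finite S \<and> (\<forall>x\<in>S. length x = p) \<and> (\<forall>x\<in>S. \<forall>y\<in>S. x \<noteq> y \<longrightarrow> orthw x y)
     \<and> (\<forall>\<phi>. \<exists>x\<in>S. \<forall>j<p. x!j \<noteq> \<phi> j)"

definition ach :: "nat \<Rightarrow> nat \<Rightarrow> bool" where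
  "ach p s \<longleftrightarrow> (\<exists>S. cUPB p S \<and> card S = s)"

definition wv :: "nat \<Rightarrow> word \<Rightarrow> bool list \<Rightarrow> complex" where
  "wv p x = prod_vec p (\<lambda>j. sv (x!j))"

lemma tinner_wv: "tinner p (wv p x) (wv p y) = (\<Prod>j<p. linner (sv (x!j)) (sv (y!j)))"
  unfolding wv_def by (rule tinner_prod)

lemma tinner_wv_self: "tinner p (wv p x) (wv p x) = 1"
  by (simp add: tinner_wv linner_sv_self)

lemma tinner_wv_orth:
  assumes "orthw x y" "length x = p"
  shows "tinner p (wv p x) (wv p y) = 0"
proof -
  obtain j where j: "j < p" "fst (x!j) = fst (y!j)" "snd (x!j) \<noteq> snd (y!j)"
    using assms unfolding orthw_def by auto
  have "y!j = (fst (x!j), \<not> snd (x!j))" using j by (cases "y!j") auto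
  then have "linner (sv (x!j)) (sv (y!j)) = 0"
    using linner_sv_compl[of "fst (x!j)" "snd (x!j)"] by simp
  then show ?thesis unfolding tinner_wv using j(1) by (intro prod_zero) auto
qed

lemma prod_vec_nonzero:
  assumes "prod_vec p w \<noteq> (\<lambda>_. 0)" "j < p"
  shows "w j False \<noteq> 0 \<or> w j True \<noteq> 0"
proof -
  obtain b where b: "prod_vec p w b \<noteq> 0" using assms(1) by auto
  then have lb: "length b = p" and pr: "(\<Prod>k<p. w k (b!k)) \<noteq> 0"
    unfolding prod_vec_def by (auto split: if_splits)
  then have "w j (b!j) \<noteq> 0" using assms(2) by auto
  then show ?thesis by (cases "b!j") auto
qed

theorem cUPB_to_UPB:
  assumes "cUPB p S"
  shows "is_UPB p (wv p ` S) \<and> card (wv p ` S) = card S"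
proof -
  have fin: "finite S" and len: "\<forall>x\<in>S. length x = p"
    and orth: "\<forall>x\<in>S. \<forall>y\<in>S. x \<noteq> y \<longrightarrow> orthw x y"
    and av: "\<forall>\<phi>. \<exists>x\<in>S. \<forall>j<p. x!j \<noteq> \<phi> j"
    using assms unfolding cUPB_def by auto
  have inj: "inj_on (wv p) S"
  proof (rule inj_onI)
    fix x y assume xy: "x \<in> S" "y \<in> S" "wv p x = wv p y"
    show "x = y"
    proof (rule ccontr)
      assume "x \<noteq> y"
      then have "tinner p (wv p x) (wv p y) = 0" using orth xy len tinner_wv_orth by blast
      then show False using xy(3) tinner_wv_self[of p y] by simp
    qed
  qed
  have U1: "\<forall>x\<in>wv p ` S. is_product_vec p x \<and> tinner p x x = 1"
  proof
    fix x assume "x \<in> wv p ` S"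
    then obtain y where y: "x = wv p y" by auto
    show "is_product_vec p x \<and> tinner p x x = 1"
      unfolding y using tinner_wv_self[of p y] unfolding is_product_vec_def wv_def by auto
  qed
  have U2: "\<forall>x\<in>wv p ` S. \<forall>y\<in>wv p ` S. x \<noteq> y \<longrightarrow> tinner p x y = 0"
  proof (intro ballI impI)
    fix x y assume "x \<in> wv p ` S" "y \<in> wv p ` S" "x \<noteq> y"
    then obtain x' y' where "x' \<in> S" "y' \<in> S" "x = wv p x'" "y = wv p y'" "x' \<noteq> y'" by auto
    then show "tinner p x y = 0" using orth len tinner_wv_orth by simp
  qed
  have U3: "\<exists>x\<in>wv p ` S. tinner p x z \<noteq> 0" if z: "is_product_vec p z" "z \<noteq> (\<lambda>_. 0)" for z
  proof -
    obtain w where zw: "z = prod_vec p w" using z(1) unfolding is_product_vec_def by auto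
    define \<phi> where "\<phi> j = (SOME \<sigma>. linner (sv \<sigma>) (w j) = 0)" for j
    obtain x where x: "x \<in> S" "\<forall>j<p. x!j \<noteq> \<phi> j" using av by blast
    have "linner (sv (x!j)) (w j) \<noteq> 0" if j: "j < p" for j
    proof
      assume h: "linner (sv (x!j)) (w j) = 0"
      then have "linner (sv (\<phi> j)) (w j) = 0" unfolding \<phi>_def by (rule someI)
      then have "x!j = \<phi> j" using h prod_vec_nonzero[OF z(2)[unfolded zw] j] sv_orth_unique by blast
      then show False using x(2) j by auto
    qed
    then have "tinner p (wv p x) z \<noteq> 0"
      unfolding zw wv_def tinner_prod by (simp add: prod_zero_iff)
    then show ?thesis using x(1) by blast
  qed
  have "finite (wv p ` S)" using fin by simp
  then show ?thesis unfolding is_UPB_def using U1 U2 U3 card_image[OF inj] by (intro conjI) auto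
qed

lemma ach_UPB: "ach p s \<Longrightarrow> \<exists>S. is_UPB p S \<and> card S = s"
  unfolding ach_def using cUPB_to_UPB by metis




definition glue :: "word set \<Rightarrow> (word \<Rightarrow> word set) \<Rightarrow> word set" where
  "glue B F = (\<Union>b\<in>B. (\<lambda>x. b @ x) ` F b)"

lemma glue_cUPB:
  assumes B: "cUPB q B" and F: "\<forall>b\<in>B. cUPB r (F b)"
  shows "cUPB (q+r) (glue B F)"
proof -
  have finB: "finite B" and lenB: "\<forall>b\<in>B. length b = q"
    and orB: "\<forall>x\<in>B. \<forall>y\<in>B. x \<noteq> y \<longrightarrow> orthw x y"
    and avB: "\<forall>\<phi>. \<exists>x\<in>B. \<forall>j<q. x!j \<noteq> \<phi> j" using B unfolding cUPB_def by auto
  have finF: "\<forall>b\<in>B. finite (F b)" and lenF: "\<forall>b\<in>B. \<forall>x\<in>F b. length x = r"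
    and orF: "\<forall>b\<in>B. \<forall>x\<in>F b. \<forall>y\<in>F b. x \<noteq> y \<longrightarrow> orthw x y"
    and avF: "\<forall>b\<in>B. \<forall>\<phi>. \<exists>x\<in>F b. \<forall>j<r. x!j \<noteq> \<phi> j" using F unfolding cUPB_def by auto
  have fin: "finite (glue B F)" unfolding glue_def using finB finF by auto
  have len: "\<forall>x\<in>glue B F. length x = q + r" unfolding glue_def using lenB lenF by auto
  have orth: "orthw u v" if uv: "u \<in> glue B F" "v \<in> glue B F" "u \<noteq> v" for u v
  proof -
    obtain b x where bx: "b \<in> B" "x \<in> F b" "u = b @ x" using uv(1) unfolding glue_def by auto
    obtain c y where cy: "c \<in> B" "y \<in> F c" "v = c @ y" using uv(2) unfolding glue_def by auto
    show ?thesis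
    proof (cases "b = c")
      case False
      then have "orthw b c" using orB bx cy by simp
      then obtain j where j: "j < length b" "fst (b!j) = fst (c!j)" "snd (b!j) \<noteq> snd (c!j)"
        unfolding orthw_def by blast
      have "length c = length b" using lenB bx cy by simp
      then show ?thesis unfolding orthw_def bx cy using j
        by (intro exI[of _ j]) (simp add: nth_append)
    next
      case True
      then have "x \<noteq> y" using uv bx cy by auto
      then have "orthw x y" using orF bx cy True by simp
      then obtain j where j: "j < length x" "fst (x!j) = fst (y!j)" "snd (x!j) \<noteq> snd (y!j)"
        unfolding orthw_def by blast
      show ?thesis unfolding orthw_def bx cy True using j
        by (intro exI[of _ "length c + j"]) (simp add: nth_append)
    qed
  qed
  have av: "\<exists>u\<in>glue B F. \<forall>j<q+r. u!j \<noteq> \<phi> j" for \<phi>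
  proof -
    obtain b where b: "b \<in> B" "\<forall>j<q. b!j \<noteq> \<phi> j" using avB by meson
    obtain x where x: "x \<in> F b" "\<forall>j<r. x!j \<noteq> \<phi> (q + j)" using avF b(1) by meson
    have lb: "length b = q" using lenB b by auto
    have "\<forall>j<q+r. (b@x)!j \<noteq> \<phi> j"
    proof (intro allI impI)
      fix j assume j: "j < q + r"
      show "(b@x)!j \<noteq> \<phi> j"
      proof (cases "j < q")
        case True then show ?thesis using b lb by (simp add: nth_append)
      next
        case False
        then have "j - q < r" using j by simp
        then show ?thesis using x(2)[rule_format, of "j - q"] False lb by (simp add: nth_append)
      qed
    qed
    moreover have "b @ x \<in> glue B F" unfolding glue_def using b x by auto
    ultimately show ?thesis by blast
  qed
  show ?thesis unfolding cUPB_def using fin len orth av by (intro conjI ballI impI allI) auto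
qed

lemma glue_card:
  assumes B: "cUPB q B" and F: "\<forall>b\<in>B. cUPB r (F b)"
  shows "card (glue B F) = (\<Sum>b\<in>B. card (F b))"
proof -
  have finB: "finite B" and lenB: "\<forall>b\<in>B. length b = q" using B unfolding cUPB_def by auto
  have finF: "\<forall>b\<in>B. finite (F b)" using F unfolding cUPB_def by auto
  have "card (glue B F) = (\<Sum>b\<in>B. card ((\<lambda>x. b @ x) ` F b))"
    unfolding glue_def
  proof (rule card_UN_disjoint[OF finB])
    show "\<forall>b\<in>B. finite ((@) b ` F b)" using finF by auto
    show "\<forall>b\<in>B. \<forall>c\<in>B. b \<noteq> c \<longrightarrow> (@) b ` F b \<inter> (@) c ` F c = {}"
    proof (intro ballI impI)
      fix b c assume bc: "b \<in> B" "c \<in> B" "b \<noteq> c"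
      show "(@) b ` F b \<inter> (@) c ` F c = {}"
      proof (rule ccontr)
        assume "(@) b ` F b \<inter> (@) c ` F c \<noteq> {}"
        then obtain x y where "b @ x = c @ y" by auto
        moreover have "length b = length c" using lenB bc by simp
        ultimately show False using bc(3) by simp
      qed
    qed
  qed
  also have "\<dots> = (\<Sum>b\<in>B. card (F b))"
    by (intro sum.cong refl card_image) (simp add: inj_on_def)
  finally show ?thesis .
qed

lemma ach_glue:
  assumes "ach q t" "length xs = t" "\<forall>s\<in>set xs. ach r s"
  shows "ach (q + r) (sum_list xs)"
proof -
  obtain B where B: "cUPB q B" "card B = t" using assms(1) unfolding ach_def by auto
  have "\<forall>s\<in>set xs. \<exists>S. cUPB r S \<and> card S = s" using assms(3) unfolding ach_def by auto
  then obtain G where G: "\<forall>s\<in>set xs. cUPB r (G s) \<and> card (G s) = s" by metis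
  have finB: "finite B" using B unfolding cUPB_def by auto
  obtain h where h: "bij_betw h B {0..<card B}" using ex_bij_betw_finite_nat[OF finB] by auto
  define F where "F b = G (xs ! h b)" for b
  have hb: "\<forall>b\<in>B. h b < t" using h B(2) by (auto simp: bij_betw_def)
  have F: "\<forall>b\<in>B. cUPB r (F b) \<and> card (F b) = xs ! h b"
    using G hb assms(2) unfolding F_def by (auto simp: nth_mem)
  have "card (glue B F) = (\<Sum>b\<in>B. card (F b))"
    by (rule glue_card[OF B(1)]) (use F in auto)
  also have "\<dots> = (\<Sum>b\<in>B. xs ! h b)"
    using F by (intro sum.cong) auto
  also have "\<dots> = (\<Sum>i\<in>{0..<t}. xs ! i)"
    using sum.reindex_bij_betw[OF h, of "\<lambda>i. xs ! i"] B(2) by simp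
  also have "\<dots> = sum_list xs" using assms(2) by (simp add: sum_list_sum_nth)
  finally show ?thesis unfolding ach_def using glue_cUPB[OF B(1)] F by blast
qed




lemma nat_modeq_int: "(a::nat) mod m = b mod m \<longleftrightarrow> int m dvd int a - int b"
  by (metis mod_eq_dvd_iff of_nat_eq_iff zmod_int)

lemma odd_dvd2:
  assumes "odd (m::nat)" "int m dvd 2 * x"
  shows "int m dvd x"
proof -
  obtain k where k: "m = 2*k+1" using assms(1) oddE by blast
  have "x = (int k + 1) * (2 * x) - x * int m" using k by (simp add: algebra_simps)
  then show ?thesis using assms(2) by (metis dvd_diff dvd_mult dvd_triv_right)
qed

definition partner :: "nat \<Rightarrow> nat \<Rightarrow> nat \<Rightarrow> nat" where
  "partner m r v = (if v = m then r else if v = r then m else (2*r + m - v) mod m)"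

lemma partner_le: "r < m \<Longrightarrow> partner m r v \<le> m"
  unfolding partner_def by (auto intro: less_imp_le)

lemma small_eq: "(a::nat) < m \<Longrightarrow> b < m \<Longrightarrow> int m dvd int a - int b \<Longrightarrow> a = b"
  using nat_modeq_int[of a m b] by simp

lemma partner_ne:
  assumes "odd m" "r < m" "v \<le> m"
  shows "partner m r v \<noteq> v"
proof
  assume h: "partner m r v = v"
  show False
  proof (cases "v = m \<or> v = r")
    case True then show ?thesis using h assms by (auto simp: partner_def)
  next
    case False
    then have vm: "v < m" "v \<noteq> r" using assms by auto
    then have "(2*r + m - v) mod m = v mod m" using h by (simp add: partner_def)
    then have "int m dvd int (2*r + m - v) - int v" using nat_modeq_int by blast
    moreover have "int (2*r + m - v) - int v = 2 * (int r - int v) + int m" using vm by simp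
    ultimately have "int m dvd 2 * (int r - int v)" by (metis dvd_add_left_iff dvd_refl)
    then have "int m dvd int r - int v" using odd_dvd2 assms(1) by blast
    then have "r = v" using small_eq vm assms(2) by blast
    then show False using vm by simp
  qed
qed

lemma partner_inv:
  assumes "odd m" "r < m" "v \<le> m"
  shows "partner m r (partner m r v) = v"
proof (cases "v = m \<or> v = r")
  case True then show ?thesis using assms by (auto simp: partner_def)
next
  case False
  then have vm: "v < m" "v \<noteq> r" using assms by auto
  define w where "w = (2*r + m - v) mod m"
  have pw: "partner m r v = w" using vm unfolding partner_def w_def by simp
  have wm: "w < m" using assms(2) unfolding w_def by simp
  have wr: "w \<noteq> r" using partner_ne[OF assms] pw partner_ne[OF assms(1,2), of w] wm
  proof -
    show "w \<noteq> r"
    proof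
      assume "w = r"
      then have "(2*r + m - v) mod m = r mod m" using assms(2) unfolding w_def by simp
      then have "int m dvd int (2*r + m - v) - int r" using nat_modeq_int by blast
      moreover have "int (2*r + m - v) - int r = (int r - int v) + int m" using vm by simp
      ultimately have "int m dvd int r - int v" by (metis dvd_add_left_iff dvd_refl)
      then show False using small_eq vm assms(2) by blast
    qed
  qed
  have "partner m r w = (2*r + m - w) mod m" using wm wr unfolding partner_def by simp
  also have "\<dots> = v"
  proof -
    have "w mod m = (2*r + m - v) mod m" unfolding w_def by simp
    then have d: "int m dvd int w - int (2*r + m - v)" using nat_modeq_int by blast
    have a1: "int (2*r + m - w) = 2 * int r + int m - int w" using wm by (simp add: of_nat_diff)
    have a2: "int (2*r + m - v) = 2 * int r + int m - int v" using vm by (simp add: of_nat_diff)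
    have "int (2*r + m - w) - int v = - (int w - int (2*r + m - v))"
      unfolding a1 a2 by simp
    then have "int m dvd int (2*r + m - w) - int v" using d
      by (metis dvd_minus_iff)
    then have "(2*r + m - w) mod m = v mod m" using nat_modeq_int by blast
    then show ?thesis using vm by simp
  qed
  finally show ?thesis using pw by simp
qed

lemma partner_exists:
  assumes "odd m" "v \<le> m" "v' \<le> m" "v \<noteq> v'"
  shows "\<exists>r<m. partner m r v = v'"
proof -
  consider "v = m" | "v' = m" | "v < m" "v' < m" using assms by linarith
  then show ?thesis
  proof cases
    case 1 then show ?thesis using assms by (intro exI[of _ v']) (auto simp: partner_def)
  next
    case 2 then show ?thesis using assms by (intro exI[of _ v]) (auto simp: partner_def)
  next
    case 3
    obtain k where k: "m = 2*k+1" using assms(1) oddE by blast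
    define r where "r = ((v + v') * (k+1)) mod m"
    have rm: "r < m" unfolding r_def using k by simp
    have r2: "int m dvd 2 * int r - (int v + int v')"
    proof -
      have "r mod m = ((v + v') * (k+1)) mod m" unfolding r_def by simp
      then have d: "int m dvd int r - int ((v + v') * (k+1))" using nat_modeq_int by blast
      have "2 * int r - (int v + int v') = 2 * (int r - int ((v + v') * (k+1))) + (int v + int v') * int m"
        using k by (simp add: algebra_simps)
      then show ?thesis using d by (metis dvd_add dvd_mult dvd_triv_right)
    qed
    have rv: "r \<noteq> v"
    proof
      assume "r = v"
      then have "int m dvd int v - int v'" using r2 by simp
      then show False using small_eq 3 assms(4) by blast
    qed
    have "partner m r v = (2*r + m - v) mod m" using 3 rv unfolding partner_def by auto
    also have "\<dots> = v'"
    proof -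
      have "int (2*r + m - v) - int v' = (2 * int r - (int v + int v')) + int m" using 3 by simp
      then have "int m dvd int (2*r + m - v) - int v'" using r2 by (metis dvd_add dvd_refl)
      then have "(2*r + m - v) mod m = v' mod m" using nat_modeq_int by blast
      then show ?thesis using 3 by simp
    qed
    finally show ?thesis using rm by blast
  qed
qed

definition oddword :: "nat \<Rightarrow> nat \<Rightarrow> word" where
  "oddword m v = map (\<lambda>r. (min v (partner m r v), partner m r v < v)) [0..<m]"

lemma oddword_len: "length (oddword m v) = m" unfolding oddword_def by simp

lemma oddword_nth: "r < m \<Longrightarrow> oddword m v ! r = (min v (partner m r v), partner m r v < v)"
  unfolding oddword_def by simp

lemma oddword_col:
  assumes "odd m" "r < m" "v \<le> m" "v' \<le> m" "v \<noteq> v'"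
  shows "oddword m v ! r \<noteq> oddword m v' ! r"
proof
  assume h: "oddword m v ! r = oddword m v' ! r"
  define w where "w = partner m r v"
  define w' where "w' = partner m r v'"
  have e1: "min v w = min v' w'" and e2: "(w < v) = (w' < v')"
    using h oddword_nth[OF assms(2)] unfolding w_def w'_def by auto
  have wv: "w \<noteq> v" "w' \<noteq> v'" using partner_ne assms unfolding w_def w'_def by auto
  have pw: "partner m r w = v" "partner m r w' = v'"
    using partner_inv assms unfolding w_def w'_def by auto
  consider "min v w = v" "min v' w' = v'" | "min v w = v" "min v' w' = w'"
     | "min v w = w" "min v' w' = v'" | "min v w = w" "min v' w' = w'"
    by linarith
  then show False
  proof cases
    case 1 then show ?thesis using e1 assms by simp
  next
    case 2 then have "w' = v" using e1 by simp
    then have "v' = w" using pw w_def by simp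
    then show ?thesis using e2 \<open>w' = v\<close> wv by linarith
  next
    case 3 then have "w = v'" using e1 by simp
    then have "v = w'" using pw w'_def by simp
    then show ?thesis using e2 \<open>w = v'\<close> wv by linarith
  next
    case 4 then have "w = w'" using e1 by simp
    then show ?thesis using pw assms by simp
  qed
qed

lemma oddword_orth:
  assumes "odd m" "v \<le> m" "v' \<le> m" "v \<noteq> v'"
  shows "orthw (oddword m v) (oddword m v')"
proof -
  obtain r where r: "r < m" "partner m r v = v'" using partner_exists[OF assms] by blast
  have "partner m r v' = v" using partner_inv[OF assms(1) r(1) assms(2)] r by simp
  then show ?thesis unfolding orthw_def oddword_len using r assms(4)
    by (intro exI[of _ r]) (auto simp: oddword_nth min_def)
qed

definition oddS :: "nat \<Rightarrow> word set" where "oddS m = oddword m ` {0..m}"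

lemma oddS_cUPB:
  assumes "odd m"
  shows "cUPB m (oddS m) \<and> card (oddS m) = Suc m"
proof -
  have inj: "inj_on (oddword m) {0..m}"
  proof (rule inj_onI)
    fix v v' assume "v \<in> {0..m}" "v' \<in> {0..m}" "oddword m v = oddword m v'"
    then show "v = v'" using oddword_orth[OF assms, of v v'] unfolding orthw_def by auto
  qed
  have card: "card (oddS m) = Suc m" unfolding oddS_def using card_image[OF inj] by simp
  have av: "\<exists>x\<in>oddS m. \<forall>j<m. x!j \<noteq> \<phi> j" for \<phi>
  proof (rule ccontr)
    assume "\<not> ?thesis"
    then have all: "\<forall>v\<in>{0..m}. \<exists>j<m. oddword m v ! j = \<phi> j" unfolding oddS_def by auto
    define K where "K j = {v\<in>{0..m}. oddword m v ! j = \<phi> j}" for j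
    have "{0..m} \<subseteq> (\<Union>j<m. K j)"
    proof
      fix v assume v: "v \<in> {0..m}"
      then obtain j where "j < m" "oddword m v ! j = \<phi> j" using all by blast
      then show "v \<in> (\<Union>j<m. K j)" using v unfolding K_def by blast
    qed
    then have "card {0..m} \<le> card (\<Union>j<m. K j)" by (intro card_mono) (auto simp: K_def)
    also have "\<dots> \<le> (\<Sum>j<m. card (K j))" by (rule card_UN_le) simp
    also have "\<dots> \<le> (\<Sum>j<m. 1)"
    proof (rule sum_mono)
      fix j assume j: "j \<in> {..<m}"
      have "finite (K j)" unfolding K_def by simp
      moreover have "\<forall>a\<in>K j. \<forall>b\<in>K j. a = b"
        using oddword_col[OF assms] j unfolding K_def by fastforce
      ultimately show "card (K j) \<le> 1" using card_le_Suc0_iff_eq by auto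
    qed
    finally show False by simp
  qed
  have orth: "\<forall>x\<in>oddS m. \<forall>y\<in>oddS m. x \<noteq> y \<longrightarrow> orthw x y"
  proof (intro ballI impI)
    fix x y assume "x \<in> oddS m" "y \<in> oddS m" "x \<noteq> y"
    then obtain v v' where "v \<le> m" "v' \<le> m" "x = oddword m v" "y = oddword m v'" "v \<noteq> v'"
      unfolding oddS_def by (auto, metis)
    then show "orthw x y" using oddword_orth[OF assms] by simp
  qed
  have "cUPB m (oddS m)" unfolding cUPB_def
    using oddword_len orth av unfolding oddS_def
    by (intro conjI) auto
  then show ?thesis using card by simp
qed

lemma ach_odd: "odd m \<Longrightarrow> ach m (Suc m)"
  unfolding ach_def using oddS_cUPB by blast




definition orthb :: "word \<Rightarrow> word \<Rightarrow> bool" where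
  "orthb x y = list_ex (\<lambda>(a,b). fst a = fst b \<and> snd a \<noteq> snd b) (zip x y)"

lemma orthb_orthw: "length x = length y \<Longrightarrow> orthb x y \<Longrightarrow> orthw x y"
  unfolding orthb_def orthw_def list_ex_iff by (auto simp: set_zip) (metis fst_conv snd_conv)

fun pairs_orth :: "word list \<Rightarrow> bool" where
  "pairs_orth [] = True"
| "pairs_orth (x#xs) = (list_all (orthb x) xs \<and> pairs_orth xs)"

function cover :: "nat \<Rightarrow> nat \<Rightarrow> word list \<Rightarrow> bool" where
  "cover j p R = (if R = [] then True else if p \<le> j then False else
     list_ex (\<lambda>\<sigma>. cover (Suc j) p (filter (\<lambda>x. x!j \<noteq> \<sigma>) R)) (remdups (map (\<lambda>x. x!j) R)))"
  by pat_completeness auto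
termination by (relation "measure (\<lambda>(j,p,R). p - j)") auto

declare cover.simps[simp del]

lemma cover_sound:
  "\<not> cover j p R \<Longrightarrow> \<exists>x\<in>set R. \<forall>k. j \<le> k \<longrightarrow> k < p \<longrightarrow> x!k \<noteq> \<phi> k"
proof (induction j p R rule: cover.induct)
  case (1 j p R)
  have Rne: "R \<noteq> []" using "1.prems" cover.simps[of j p R] by auto
  obtain x0 where x0: "x0 \<in> set R" using Rne by (meson list.set_sel(1))
  show ?case
  proof (cases "p \<le> j")
    case True
    then show ?thesis using x0 by auto
  next
    case False
    have nc: "\<not> list_ex (\<lambda>\<sigma>. cover (Suc j) p (filter (\<lambda>x. x!j \<noteq> \<sigma>) R)) (remdups (map (\<lambda>x. x!j) R))"
      using "1.prems" Rne False cover.simps[of j p R] by simp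
    define \<sigma> where "\<sigma> = (if \<phi> j \<in> set (map (\<lambda>x. x!j) R) then \<phi> j else x0!j)"
    have \<sigma>in: "\<sigma> \<in> set (remdups (map (\<lambda>x. x!j) R))" unfolding \<sigma>_def using x0 by auto
    have "\<not> cover (Suc j) p (filter (\<lambda>x. x!j \<noteq> \<sigma>) R)" using nc \<sigma>in unfolding list_ex_iff by blast
    then obtain x where x: "x \<in> set (filter (\<lambda>x. x!j \<noteq> \<sigma>) R)" "\<forall>k. Suc j \<le> k \<longrightarrow> k < p \<longrightarrow> x!k \<noteq> \<phi> k"
      using "1.IH"[OF Rne False \<sigma>in] by blast
    have xj: "x!j \<noteq> \<phi> j"
    proof (cases "\<phi> j \<in> set (map (\<lambda>x. x!j) R)")
      case True then show ?thesis using x(1) unfolding \<sigma>_def by auto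
    next
      case False then show ?thesis using x(1) by (auto simp: image_iff)
    qed
    have "\<forall>k. j \<le> k \<longrightarrow> k < p \<longrightarrow> x!k \<noteq> \<phi> k"
    proof (intro allI impI)
      fix k assume "j \<le> k" "k < p"
      then show "x!k \<noteq> \<phi> k" using x(2) xj by (cases "k = j") auto
    qed
    then show ?thesis using x(1) by auto
  qed
qed
lemma pairs_orth_sound: "pairs_orth L \<Longrightarrow> x \<in> set L \<Longrightarrow> y \<in> set L \<Longrightarrow> x \<noteq> y \<Longrightarrow>
   (\<forall>z\<in>set L. length z = p) \<Longrightarrow> orthw x y"
proof (induction L)
  case Nil then show ?case by simp
next
  case (Cons a L)
  have sym: "orthw u v \<Longrightarrow> length u = length v \<Longrightarrow> orthw v u" for u v
    unfolding orthw_def by (metis (full_types))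
  show ?case
  proof (cases "x = a \<or> y = a")
    case True
    then show ?thesis
    proof
      assume "x = a"
      then have "y \<in> set L" using Cons.prems by auto
      then show ?thesis using Cons.prems \<open>x = a\<close> orthb_orthw by (auto simp: list_all_iff)
    next
      assume "y = a"
      then have "x \<in> set L" using Cons.prems by auto
      then have "orthw y x" using Cons.prems \<open>y = a\<close> orthb_orthw by (auto simp: list_all_iff)
      then show ?thesis using sym Cons.prems by auto
    qed
  next
    case False
    then show ?thesis using Cons by auto
  qed
qed

lemma check_ach:
  assumes "list_all (\<lambda>x. length x = p) L" "pairs_orth L" "distinct L" "\<not> cover 0 p L"
  shows "ach p (length L)"
proof -
  have "cUPB p (set L)" unfolding cUPB_def
  proof (intro conjI)
    show "finite (set L)" by simp
    show "\<forall>x\<in>set L. length x = p" using assms(1) by (simp add: list_all_iff)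
    then show "\<forall>x\<in>set L. \<forall>y\<in>set L. x \<noteq> y \<longrightarrow> orthw x y"
      using pairs_orth_sound[OF assms(2)] by blast
    show "\<forall>\<phi>. \<exists>x\<in>set L. \<forall>j<p. x!j \<noteq> \<phi> j"
      using cover_sound[OF assms(4)] by auto
  qed
  then show ?thesis unfolding ach_def using distinct_card[OF assms(3)] by blast
qed

lemma ach_0_1: "ach 0 1"
  using check_ach[of 0 "[[]]"] by (simp add: cover.simps)



lemma ach_4_6: "ach 4 6"
proof -
  have "ach 4 (length ([[(0, False), (0, False), (0, False), (0, False)], [(0, False), (2, True), (0, True), (3, False)], [(1, False), (0, True), (2, True), (3, True)], [(1, True), (2, False), (0, True), (2, True)], [(0, True), (1, True), (2, False), (2, False)], [(1, True), (1, False), (0, False), (0, True)]] :: word list))"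
    by (rule check_ach; code_simp)
  then show ?thesis by (simp add: numeral_eq_Suc)
qed

lemma ach_4_7: "ach 4 7"
proof -
  have "ach 4 (length ([[(0, False), (0, False), (0, False), (0, False)], [(1, False), (0, True), (3, False), (1, True)], [(0, True), (0, True), (3, True), (0, False)], [(0, False), (1, True), (0, True), (1, False)], [(1, False), (0, False), (0, True), (1, True)], [(0, True), (0, False), (1, False), (1, False)], [(1, True), (1, False), (1, True), (0, True)]] :: word list))"
    by (rule check_ach; code_simp)
  then show ?thesis by (simp add: numeral_eq_Suc)
qed

lemma ach_4_9: "ach 4 9"
proof -
  have "ach 4 (length ([[(0, False), (0, False), (0, False), (0, False)], [(0, True), (0, True), (2, True), (0, True)], [(1, True), (1, True), (2, False), (0, True)], [(1, False), (0, False), (0, True), (1, True)], [(0, False), (0, True), (2, True), (1, True)], [(0, True), (0, False), (2, True), (1, False)], [(0, True), (0, True), (0, True), (0, False)], [(0, False), (1, False), (0, True), (1, False)], [(0, True), (0, True), (0, False), (0, False)]] :: word list))"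
    by (rule check_ach; code_simp)
  then show ?thesis by (simp add: numeral_eq_Suc)
qed

lemma ach_4_10: "ach 4 10"
proof -
  have "ach 4 (length ([[(0, False), (0, False), (0, False), (0, False)], [(1, False), (0, False), (0, True), (2, False)], [(1, True), (1, True), (1, True), (0, True)], [(0, True), (1, False), (0, False), (1, True)], [(1, True), (0, True), (1, False), (1, False)], [(1, False), (0, True), (2, True), (1, False)], [(1, False), (0, True), (2, False), (1, False)], [(1, False), (0, False), (0, True), (2, True)], [(1, True), (0, False), (0, True), (0, False)], [(0, False), (0, True), (1, False), (1, True)]] :: word list))"
    by (rule check_ach; code_simp)
  then show ?thesis by (simp add: numeral_eq_Suc)
qed

lemma ach_6_10: "ach 6 10"
proof -
  have "ach 6 (length ([[(0, False), (2, False), (0, False), (2, False), (0, False), (2, False)], [(2, False), (2, True), (1, False), (3, True), (1, True), (1, False)], [(1, True), (1, False), (2, False), (2, True), (1, False), (3, True)], [(1, False), (3, True), (1, True), (1, False), (2, False), (2, True)], [(0, True), (0, False), (2, True), (3, False), (2, True), (0, True)], [(2, True), (0, True), (0, True), (0, False), (2, True), (3, False)], [(2, True), (3, False), (2, True), (0, True), (0, True), (0, False)], [(2, True), (1, True), (0, True), (1, True), (2, False), (0, True)], [(2, False), (0, True), (2, True), (1, True), (0, True), (1, True)], [(0, True), (1, True), (2, False), (0, True), (2, True), (1, True)]] :: word list))"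
    by (rule check_ach; code_simp)
  then show ?thesis by (simp add: numeral_eq_Suc)
qed

lemma ach_6_11: "ach 6 11"
proof -
  have "ach 6 (length ([[(0, False), (3, True), (0, False), (3, True), (0, False), (3, True)], [(2, False), (3, False), (2, False), (3, False), (2, False), (3, False)], [(0, False), (1, True), (2, False), (0, False), (0, True), (3, True)], [(0, True), (3, True), (0, False), (1, True), (2, False), (0, False)], [(2, False), (0, False), (0, True), (3, True), (0, False), (1, True)], [(1, False), (3, False), (2, True), (2, False), (1, True), (1, False)], [(1, True), (1, False), (1, False), (3, False), (2, True), (2, False)], [(2, True), (2, False), (1, True), (1, False), (1, False), (3, False)], [(0, True), (0, True), (2, False), (1, True), (2, True), (2, True)], [(2, True), (2, True), (0, True), (0, True), (2, False), (1, True)], [(2, False), (1, True), (2, True), (2, True), (0, True), (0, True)]] :: word list))"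
    by (rule check_ach; code_simp)
  then show ?thesis by (simp add: numeral_eq_Suc)
qed



lemma ach_1_2: "ach 1 2"
  using ach_odd[of 1] by (simp add: numeral_2_eq_2)

lemma ach_add: "ach p a \<Longrightarrow> ach p b \<Longrightarrow> ach (Suc p) (a + b)"
  using ach_glue[OF ach_1_2, of "[a,b]" p] by simp

lemma ach_pow: "ach p (2^p)"
proof (induction p)
  case 0 then show ?case using ach_0_1 by simp
next
  case (Suc p) then show ?case using ach_add[of p "2^p" "2^p"] by (simp add: mult_2)
qed

lemma interval_sum:
  "1 \<le> j \<Longrightarrow> j*a \<le> s \<Longrightarrow> s \<le> j*b \<Longrightarrow>
   \<exists>xs. length xs = j \<and> (\<forall>x\<in>set xs. a \<le> x \<and> x \<le> (b::nat)) \<and> sum_list xs = s"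
proof (induction j arbitrary: s rule: nat_induct_at_least)
  case base
  then show ?case by (intro exI[of _ "[s]"]) auto
next
  case (Suc j)
  define x where "x = max a (s - j*b)"
  have ab: "a \<le> b"
  proof (rule ccontr)
    assume "\<not> a \<le> b"
    then have "Suc j * b < Suc j * a" by (intro mult_strict_left_mono) auto
    then show False using Suc.prems by linarith
  qed
  have x1: "a \<le> x" "x \<le> b" using Suc.prems ab unfolding x_def by auto
  have jab: "j*a \<le> j*b" using ab by simp
  have pr: "j*a + a \<le> s" "s \<le> j*b + b" using Suc.prems by (simp_all add: algebra_simps)
  have x2: "j*a \<le> s - x \<and> s - x \<le> j*b \<and> x \<le> s"
  proof (cases "a \<le> s - j*b")
    case True then have "x = s - j*b" unfolding x_def by simp
    then show ?thesis using pr jab True by arith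
  next
    case False then have "x = a" unfolding x_def by simp
    then show ?thesis using pr jab False by arith
  qed
  obtain ys where ys: "length ys = j" "\<forall>y\<in>set ys. a \<le> y \<and> y \<le> b" "sum_list ys = s - x"
    using Suc.IH x2 by blast
  show ?case using ys x1 x2 by (intro exI[of _ "x # ys"]) auto
qed

lemma mixed_sum:
  assumes "1 \<le> k" "m*c + k*a \<le> s" "s \<le> m*c + k*(b::nat)"
  shows "\<exists>xs. length xs = m + k \<and> (\<forall>x\<in>set xs. x = c \<or> (a \<le> x \<and> x \<le> b)) \<and> sum_list xs = s"
proof -
  have h: "k*a \<le> s - m*c" "s - m*c \<le> k*b" using assms(2,3) by linarith+
  obtain ys where ys: "length ys = k" "\<forall>y\<in>set ys. a \<le> y \<and> y \<le> b" "sum_list ys = s - m*c"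
    using interval_sum[OF assms(1) h] by blast
  have "sum_list (ys @ replicate m c) = s" using ys(3) assms(2) by (simp add: sum_list_replicate)
  moreover have "length (ys @ replicate m c) = m + k" using ys(1) by simp
  moreover have "\<forall>x\<in>set (ys @ replicate m c). x = c \<or> (a \<le> x \<and> x \<le> b)" using ys(2) by auto
  ultimately show ?thesis by blast
qed

lemma ach_list: "ach q t \<Longrightarrow> length xs = t \<Longrightarrow> (\<forall>x\<in>set xs. ach r x) \<Longrightarrow> ach (q+r) (sum_list xs)"
  by (rule ach_glue)

lemma ach_4_8: "ach 4 8" using ach_add[OF ach_odd[of 3] ach_odd[of 3]] by simp

lemma ach4_small: "6 \<le> s \<Longrightarrow> s \<le> 10 \<Longrightarrow> ach 4 s"
proof -
  assume "6 \<le> s" "s \<le> 10"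
  then have "s = 6 \<or> s = 7 \<or> s = 8 \<or> s = 9 \<or> s = 10" by auto
  then show ?thesis using ach_4_6 ach_4_7 ach_4_8 ach_4_9 ach_4_10 by auto
qed

lemma ach_4_12: "ach 4 12" using ach_add[OF ach_odd[of 3] ach_pow[of 3]] by simp
lemma ach_4_16: "ach 4 16" using ach_pow[of 4] by simp

lemma ach5: "12 \<le> s \<Longrightarrow> s \<le> 26 \<Longrightarrow> ach 5 s"
proof -
  assume s: "12 \<le> s" "s \<le> 26"
  consider "s \<le> 20" | "s = 21" | "s = 22" | "23 \<le> s" using s by linarith
  then show ?thesis
  proof cases
    case 1
    have "ach 4 (s div 2)" "ach 4 (s - s div 2)" using s 1 by (auto intro!: ach4_small)
    then show ?thesis using ach_add[of 4 "s div 2" "s - s div 2"] by simp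
  next
    case 2 then show ?thesis using ach_add[OF ach_4_9 ach_4_12] by simp
  next
    case 3 then show ?thesis using ach_add[OF ach_4_10 ach_4_12] by simp
  next
    case 4
    have "ach 4 (s - 16)" using s 4 by (auto intro!: ach4_small)
    then show ?thesis using ach_add[OF ach_4_16, of "s - 16"] 4 by simp
  qed
qed

definition C :: "nat \<Rightarrow> bool" where
  "C p \<longleftrightarrow> (\<forall>s. 6*(p-3) \<le> s \<longrightarrow> s \<le> 2^p - 6 \<longrightarrow> ach p s)"

lemma pow_bound: "5 \<le> p \<Longrightarrow> 6*(p-3) + 11 \<le> (2::nat)^p"
proof (induction p rule: nat_induct_at_least)
  case base then show ?case by simp
next
  case (Suc p) then show ?case by simp
qed

lemma C5: "C 5" unfolding C_def using ach5 by simp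

lemma C_step:
  assumes p: "5 \<le> p" and Cp: "C p"
  shows "C (Suc p)"
  unfolding C_def
proof (intro allI impI)
  fix s assume s1: "6*(Suc p - 3) \<le> s" and s2: "s \<le> 2^Suc p - 6"
  have pb: "6*(p-3) + 11 \<le> 2^p" using pow_bound[OF p] .
  have Cp': "\<And>s. 6*(p-3) \<le> s \<Longrightarrow> s \<le> 2^p - 6 \<Longrightarrow> ach p s" using Cp unfolding C_def by blast
  show "ach (Suc p) s"
  proof (cases "12*(p-3) \<le> s")
    case True
    show ?thesis
    proof (cases "s \<le> 2^Suc p - 12")
      case True
      have "ach p (s div 2)" "ach p (s - s div 2)"
        using True \<open>12*(p-3) \<le> s\<close> by (auto intro!: Cp')
      then show ?thesis using ach_add[of p "s div 2" "s - s div 2"] by simp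
    next
      case False
      have "ach p (s - 2^p)" using False s2 pb by (intro Cp') auto
      moreover have "2^p \<le> s" using False pb by simp
      ultimately show ?thesis using ach_add[OF ach_pow[of p], of "s - 2^p"] by simp
    qed
  next
    case False
    then have sl: "s < 12*(p-3)" by simp
    show ?thesis
    proof (cases "even p")
      case True
      define q where "q = p - 3"
      define t where "t = p - 2"
      have oq: "odd q" using True p unfolding q_def by presburger
      have tq: "t = Suc q" using p unfolding q_def t_def by simp
      have st: "6*t \<le> s" "s + 12 < 12*t" using s1 sl p unfolding t_def by auto
      define e where "e = s - 6*t"
      define m where "m = e div 6"
      define r where "r = e mod 6"
      have er: "e = 6*m + r" "r < 6" unfolding m_def r_def by simp_all
      have se: "s = 6*t + e" using st unfolding e_def by simp
      have mt: "m + 3 \<le> t" using er se st by linarith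
      define k where "k = t - m"
      have tk: "t = m + k" using mt unfolding k_def by simp
      have k: "1 \<le> k" "m*12 + k*6 \<le> s" "s \<le> m*12 + k*10"
        using tk mt er se by linarith+
      obtain xs where xs: "length xs = m + k" "\<forall>x\<in>set xs. x = 12 \<or> (6 \<le> x \<and> x \<le> 10)" "sum_list xs = s"
        using mixed_sum[OF k] by blast
      have "\<forall>x\<in>set xs. ach 4 x"
      proof
        fix x assume "x \<in> set xs"
        then have "x = 12 \<or> (6 \<le> x \<and> x \<le> 10)" using xs(2) by blast
        then show "ach 4 x" using ach_4_12 ach4_small by blast
      qed
      then have "ach (q + 4) s" using ach_list[OF ach_odd[OF oq] _, of xs 4] xs tq tk by simp
      moreover have "q + 4 = Suc p" using p unfolding q_def by simp
      ultimately show ?thesis by simp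
    next
      case False
      define q where "q = p - 4"
      define t where "t = p - 3"
      have oq: "odd q" using False p unfolding q_def by presburger
      have tq: "t = Suc q" using p unfolding q_def t_def by simp
      have st: "6*t + 6 \<le> s" "s < 12*t" using s1 sl p unfolding t_def by auto
      define e where "e = s - 6*t"
      define k where "k = (e + 11) div 12"
      define r where "r = (e + 11) mod 12"
      have er: "e + 11 = 12*k + r" "r < 12" unfolding k_def r_def by simp_all
      have se: "s = 6*t + e" using st unfolding e_def by simp
      have k1: "1 \<le> k" using er se st by linarith
      have kt: "k \<le> t" using er se st by linarith
      have k6: "6*k \<le> e" using er se st k1 by presburger
      define m where "m = t - k"
      have tk: "t = m + k" using kt unfolding m_def by simp
      have k: "1 \<le> k" "m*6 + k*12 \<le> s" "s \<le> m*6 + k*18"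
        using tk k1 k6 er se by linarith+
      obtain xs where xs: "length xs = m + k" "\<forall>x\<in>set xs. x = 6 \<or> (12 \<le> x \<and> x \<le> 18)" "sum_list xs = s"
        using mixed_sum[OF k] by blast
      have a56: "ach 5 6" using ach_odd[of 5] by simp
      have "\<forall>x\<in>set xs. ach 5 x"
      proof
        fix x assume "x \<in> set xs"
        then have "x = 6 \<or> (12 \<le> x \<and> x \<le> 18)" using xs(2) by blast
        then show "ach 5 x" using a56 ach5 by auto
      qed
      then have "ach (q + 5) s" using ach_list[OF ach_odd[OF oq] _, of xs 5] xs tq tk by simp
      moreover have "q + 5 = Suc p" using p unfolding q_def by simp
      ultimately show ?thesis by simp
    qed
  qed
qed

lemma C_all: "5 \<le> p \<Longrightarrow> C p"
proof (induction p rule: nat_induct_at_least)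
  case base then show ?case by (rule C5)
next
  case (Suc p) then show ?case using C_step by blast
qed




lemma ach_6_12: "ach 6 12" using ach_add[OF ach_odd[of 5] ach_odd[of 5]] by simp

lemma ach7_small: "20 \<le> s \<Longrightarrow> s \<le> 23 \<Longrightarrow> ach 7 s"
proof -
  assume "20 \<le> s" "s \<le> 23"
  then have "s = 20 \<or> s = 21 \<or> s = 22 \<or> s = 23" by auto
  moreover have "ach 7 20" using ach_add[OF ach_6_10 ach_6_10] by simp
  moreover have "ach 7 21" using ach_add[OF ach_6_10 ach_6_11] by simp
  moreover have "ach 7 22" using ach_add[OF ach_6_10 ach_6_12] by simp
  moreover have "ach 7 23" using ach_add[OF ach_6_11 ach_6_12] by simp
  ultimately show ?thesis by auto
qed

theorem theorem1:
  fixes p s :: nat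
  assumes "p \<ge> 7"
    and "(real p ^ 2 + 3 * real p - 30) / 2 \<le> real s"
    and "s \<le> 2 ^ p - 6"
  shows "\<exists>S. is_UPB p S \<and> card S = s"
proof -
  have "real (p^2 + 3*p) \<le> real (2*s + 30)" using assms(2) by simp
  then have h: "p^2 + 3*p \<le> 2*s + 30" by (simp only: of_nat_le_iff)
  have "ach p s"
  proof -
    consider "9 \<le> p" | "p = 7" | "p = 8" using assms(1) by linarith
    then show ?thesis
    proof cases
      case 1
      have "9*p \<le> p^2" using 1 by (simp add: power2_eq_square)
      then have "6*(p-3) \<le> s" using h by linarith
      then show ?thesis using C_all[of p] 1 assms(3) unfolding C_def by auto
    next
      case 2
      then have s20: "20 \<le> s" using h by simp
      show ?thesis
      proof (cases "24 \<le> s")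
        case True then show ?thesis using C_all[of 7] 2 assms(3) unfolding C_def by auto
      next
        case False then show ?thesis using ach7_small s20 2 by auto
      qed
    next
      case 3
      then have s29: "29 \<le> s" using h by simp
      show ?thesis
      proof (cases "30 \<le> s")
        case True then show ?thesis using C_all[of 8] 3 assms(3) unfolding C_def by auto
      next
        case False
        then have "s = 29" using s29 by simp
        moreover have "ach 7 8" using ach_odd[of 7] by simp
        moreover have "ach 7 21" using ach7_small by simp
        ultimately show ?thesis using ach_add[of 7 8 21] 3 by simp
      qed
    qed
  qed
  then show ?thesis using ach_UPB by blast
qed


end
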